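(* Let $N\ge 5$ be odd, and let $G_{N,1}$ be the graph with vertex set $\mathbb Z_N$ in which two distinct vertices $i,j$ are adjacent if and only if $j-i\not\equiv\pm1\pmod N$. Put $\Delta=\sqrt{N(N-4)}$ and $\rho=\frac{N-2+\Delta}{2}$. Then $G_{N,1}$ has $m=\frac{N(N-3)}{2}$ edges, and for $u,v\in\mathbb Z_N$ with $q\in\{0,1,\dots,N-1\}$, $q\equiv v-u\pmod N$, the expected hitting time of $v$ by the simple random walk on $G_{N,1}$ started at $u$ is \[ H^{(1)}(u,v)=\frac{N(N-3)}{\Delta(\rho^N+1)}\left\{\rho^N-1+(-1)^q(\rho^q-\rho^{N-q})\right\}. \]
   Context: The simple random walk moves from the current vertex to a uniformly random neighbour; $H(u,v)$ is the expected number of steps to first reach $v$ starting from $u$. *)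

theory Defs
  imports Complex_Main "HOL-Number_Theory.Cong"
begin

text \<open>A finite simple graph is given by a vertex set V and a symmetric irreflexive
adjacency relation E.  The simple random walk moves from x to a uniformly random
neighbour of x in V.\<close>

definition nbrs :: "'a set \<Rightarrow> ('a \<Rightarrow> 'a \<Rightarrow> bool) \<Rightarrow> 'a \<Rightarrow> 'a set" where
  "nbrs V E x = {w \<in> V. E x w}"

text \<open>first_hit_prob V E v u n = probability that the simple random walk started at u
first reaches v at step n (i.e. the hitting time T_v equals n).\<close>

fun first_hit_prob :: "'a set \<Rightarrow> ('a \<Rightarrow> 'a \<Rightarrow> bool) \<Rightarrow> 'a \<Rightarrow> 'a \<Rightarrow> nat \<Rightarrow> real" where
  "first_hit_prob V E v u 0 = (if u = v then 1 else 0)"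
| "first_hit_prob V E v u (Suc n) =
     (if u = v then 0
      else (\<Sum>w\<in>nbrs V E u. first_hit_prob V E v w n) / real (card (nbrs V E u)))"

definition hitting_time :: "'a set \<Rightarrow> ('a \<Rightarrow> 'a \<Rightarrow> bool) \<Rightarrow> 'a \<Rightarrow> 'a \<Rightarrow> real" where
  "hitting_time V E u v = (\<Sum>n. real n * first_hit_prob V E v u n)"

definition GN1_adj :: "nat \<Rightarrow> nat \<Rightarrow> nat \<Rightarrow> bool" where
  "GN1_adj N i j \<longleftrightarrow> i \<noteq> j \<and> \<not> [int j - int i = 1] (mod int N)
                     \<and> \<not> [int j - int i = -1] (mod int N)"

definition GN1_edges :: "nat \<Rightarrow> nat set set" where
  "GN1_edges N = {{i, j} | i j. i < N \<and> j < N \<and> GN1_adj N i j}"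

end

theory Submission
  imports Defs
begin

fun Rt :: "'a set \<Rightarrow> ('a \<Rightarrow> 'a \<Rightarrow> bool) \<Rightarrow> 'a \<Rightarrow> nat \<Rightarrow> 'a \<Rightarrow> real" where
  "Rt V E v 0 u = (if u = v then 0 else 1)"
| "Rt V E v (Suc n) u = (if u = v then 0 else (\<Sum>w\<in>nbrs V E u. Rt V E v n w) / real (card (nbrs V E u)))"

fun Gt :: "'a set \<Rightarrow> ('a \<Rightarrow> 'a \<Rightarrow> bool) \<Rightarrow> 'a \<Rightarrow> ('a \<Rightarrow> real) \<Rightarrow> nat \<Rightarrow> 'a \<Rightarrow> real" where
  "Gt V E v h 0 u = h u"
| "Gt V E v h (Suc n) u = (if u = v then 0 else (\<Sum>w\<in>nbrs V E u. Gt V E v h n w) / real (card (nbrs V E u)))"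

locale rwalk =
  fixes V :: "'a set" and E :: "'a \<Rightarrow> 'a \<Rightarrow> bool" and v :: 'a
  assumes finV: "finite V" and vV: "v \<in> V" and nbne: "\<And>u. u \<in> V \<Longrightarrow> nbrs V E u \<noteq> {}"
begin

lemma nbrs_sub: "nbrs V E u \<subseteq> V" by (auto simp: nbrs_def)
lemma fin_nbrs: "finite (nbrs V E u)" using finV nbrs_sub finite_subset by blast
lemma card_pos: "u \<in> V \<Longrightarrow> real (card (nbrs V E u)) > 0"
  using nbne fin_nbrs card_gt_0_iff by fastforce

lemma f_nonneg: "0 \<le> first_hit_prob V E v u n"
  by (induction n arbitrary: u) (auto intro!: sum_nonneg divide_nonneg_nonneg)

lemma R_bounds: "0 \<le> Rt V E v n u \<and> Rt V E v n u \<le> 1"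
proof (induction n arbitrary: u)
  case 0 then show ?case by simp
next
  case (Suc n)
  have a: "(\<Sum>w\<in>nbrs V E u. Rt V E v n w) \<le> real (card (nbrs V E u))"
    using sum_mono[of "nbrs V E u" "\<lambda>w. Rt V E v n w" "\<lambda>_. 1"] Suc by auto
  have b: "0 \<le> (\<Sum>w\<in>nbrs V E u. Rt V E v n w)" using Suc by (auto intro: sum_nonneg)
  show ?case
  proof (cases "card (nbrs V E u) = 0")
    case True then show ?thesis by simp
  next
    case False then show ?thesis using a b by (simp add: divide_le_eq)
  qed
qed

lemma f0: "first_hit_prob V E v u 0 = 1 - Rt V E v 0 u" by simp

lemma f_R: "u \<in> V \<Longrightarrow> first_hit_prob V E v u (Suc n) = Rt V E v n u - Rt V E v (Suc n) u"
proof (induction n arbitrary: u)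
  case 0
  show ?case
  proof (cases "u = v")
    case True then show ?thesis by simp
  next
    case False
    have d: "real (card (nbrs V E u)) > 0" using card_pos 0 by blast
    have "(\<Sum>w\<in>nbrs V E u. first_hit_prob V E v w 0) = (\<Sum>w\<in>nbrs V E u. 1 - Rt V E v 0 w)"
      by (intro sum.cong) auto
    also have "\<dots> = real (card (nbrs V E u)) - (\<Sum>w\<in>nbrs V E u. Rt V E v 0 w)"
      by (simp add: sum_subtractf)
    finally have e: "(\<Sum>w\<in>nbrs V E u. first_hit_prob V E v w 0) = \<dots>" .
    have "first_hit_prob V E v u (Suc 0) = (\<Sum>w\<in>nbrs V E u. first_hit_prob V E v w 0) / real (card (nbrs V E u))"
      using False by (simp only: first_hit_prob.simps(2) if_False)
    also have "\<dots> = 1 - (\<Sum>w\<in>nbrs V E u. Rt V E v 0 w) / real (card (nbrs V E u))"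
      by (subst e) (use d in \<open>simp add: diff_divide_distrib del: Rt.simps\<close>)
    also have "\<dots> = Rt V E v 0 u - Rt V E v (Suc 0) u"
    proof -
      have "Rt V E v (Suc 0) u = (\<Sum>w\<in>nbrs V E u. Rt V E v 0 w) / real (card (nbrs V E u))"
        using False by (simp only: Rt.simps(2) if_False)
      moreover have "Rt V E v 0 u = 1" using False by simp
      ultimately show ?thesis by simp
    qed
    finally show ?thesis .
  qed
next
  case (Suc n)
  have d: "real (card (nbrs V E u)) > 0" using card_pos Suc by blast
  have "(\<Sum>w\<in>nbrs V E u. first_hit_prob V E v w (Suc n)) = (\<Sum>w\<in>nbrs V E u. Rt V E v n w - Rt V E v (Suc n) w)"
    by (intro sum.cong refl Suc.IH) (use nbrs_sub in blast)
  also have "\<dots> = (\<Sum>w\<in>nbrs V E u. Rt V E v n w) - (\<Sum>w\<in>nbrs V E u. Rt V E v (Suc n) w)"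
    by (simp add: sum_subtractf)
  finally have e: "(\<Sum>w\<in>nbrs V E u. first_hit_prob V E v w (Suc n)) = \<dots>" .
  show ?case
  proof (cases "u = v")
    case True then show ?thesis by simp
  next
    case False
    have 1: "first_hit_prob V E v u (Suc (Suc n)) = (\<Sum>w\<in>nbrs V E u. first_hit_prob V E v w (Suc n)) / real (card (nbrs V E u))"
      using False by (simp only: first_hit_prob.simps(2) if_False)
    have 2: "Rt V E v (Suc n) u = (\<Sum>w\<in>nbrs V E u. Rt V E v n w) / real (card (nbrs V E u))"
      using False by (subst Rt.simps(2)) (simp only: if_False)
    have 3: "Rt V E v (Suc (Suc n)) u = (\<Sum>w\<in>nbrs V E u. Rt V E v (Suc n) w) / real (card (nbrs V E u))"
      using False by (subst Rt.simps(2)) (simp only: if_False)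
    show ?thesis unfolding 1 2 3 e by (simp only: diff_divide_distrib)
  qed
qed

lemma Rv: "Rt V E v n v = 0" by (cases n) auto

lemma R_mono: "u \<in> V \<Longrightarrow> Rt V E v (Suc n) u \<le> Rt V E v n u"
  using f_R[of u n] f_nonneg[of u "Suc n"] by linarith

lemma R_antimono: "u \<in> V \<Longrightarrow> m \<le> n \<Longrightarrow> Rt V E v n u \<le> Rt V E v m u"
proof (induction n)
  case 0 then show ?case by simp
next
  case (Suc n) then show ?case using R_mono[of u n] by (cases "m = Suc n") auto
qed

context
  fixes h :: "'a \<Rightarrow> real"
  assumes hv: "h v = 0"
    and heq: "\<And>u. u \<in> V \<Longrightarrow> u \<noteq> v \<Longrightarrow> h u = 1 + (\<Sum>w\<in>nbrs V E u. h w) / real (card (nbrs V E u))"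
begin

lemma Gv: "Gt V E v h n v = 0" using hv by (cases n) auto

lemma h_decomp: "u \<in> V \<Longrightarrow> h u = (\<Sum>k<n. Rt V E v k u) + Gt V E v h n u"
proof (induction n arbitrary: u)
  case 0 then show ?case by simp
next
  case (Suc n)
  show ?case
  proof (cases "u = v")
    case True then show ?thesis using hv Rv Gv by simp
  next
    case False
    have d: "real (card (nbrs V E u)) > 0" using card_pos Suc by blast
    have "(\<Sum>w\<in>nbrs V E u. h w) = (\<Sum>w\<in>nbrs V E u. (\<Sum>k<n. Rt V E v k w) + Gt V E v h n w)"
      using Suc.IH nbrs_sub by (intro sum.cong) auto
    also have "\<dots> = (\<Sum>k<n. (\<Sum>w\<in>nbrs V E u. Rt V E v k w)) + (\<Sum>w\<in>nbrs V E u. Gt V E v h n w)"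
      by (simp add: sum.distrib sum.swap[of _ "nbrs V E u"])
    finally have e: "(\<Sum>w\<in>nbrs V E u. h w) = \<dots>" .
    have "(\<Sum>k<Suc n. Rt V E v k u) = 1 + (\<Sum>k<n. Rt V E v (Suc k) u)"
      using False by (simp only: sum.lessThan_Suc_shift) simp
    also have "\<dots> = 1 + (\<Sum>k<n. (\<Sum>w\<in>nbrs V E u. Rt V E v k w)) / real (card (nbrs V E u))"
      using False by (simp add: sum_divide_distrib)
    finally show ?thesis using heq[OF Suc.prems False] e False d
      by (simp add: add_divide_distrib)
  qed
qed

definition "C = (\<Sum>w\<in>V. \<bar>h w\<bar>)"

lemma G_bound: "u \<in> V \<Longrightarrow> \<bar>Gt V E v h n u\<bar> \<le> C * Rt V E v n u"
proof (induction n arbitrary: u)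
  case 0
  show ?case
  proof (cases "u = v")
    case True then show ?thesis using hv by simp
  next
    case False
    have "\<bar>h u\<bar> \<le> C" unfolding C_def using 0 finV by (intro member_le_sum) auto
    then show ?thesis using False by simp
  qed
next
  case (Suc n)
  show ?case
  proof (cases "u = v")
    case True then show ?thesis by simp
  next
    case False
    have d: "real (card (nbrs V E u)) > 0" using card_pos Suc by blast
    have "\<bar>\<Sum>w\<in>nbrs V E u. Gt V E v h n w\<bar> \<le> (\<Sum>w\<in>nbrs V E u. \<bar>Gt V E v h n w\<bar>)"
      by (rule sum_abs)
    also have "\<dots> \<le> (\<Sum>w\<in>nbrs V E u. C * Rt V E v n w)"
      using Suc.IH nbrs_sub by (intro sum_mono) auto
    also have "\<dots> = C * (\<Sum>w\<in>nbrs V E u. Rt V E v n w)" by (simp add: sum_distrib_left)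
    finally have e: "\<bar>\<Sum>w\<in>nbrs V E u. Gt V E v h n w\<bar> \<le> C * (\<Sum>w\<in>nbrs V E u. Rt V E v n w)" .
    show ?thesis using False d e by (simp add: divide_le_eq abs_div pos_divide_le_eq)
  qed
qed

lemma C_nonneg: "0 \<le> C" unfolding C_def by (auto intro: sum_nonneg)

lemma R_sums: assumes u: "u \<in> V" shows "(\<lambda>k. Rt V E v k u) sums h u"
proof -
  have bnd: "\<bar>Gt V E v h n u\<bar> \<le> C" for n
    using G_bound[OF u, of n] R_bounds[of n u] C_nonneg
    by (meson order_trans mult_left_le)
  have "summable (\<lambda>k. Rt V E v k u)"
  proof (rule summableI_nonneg_bounded)
    show "0 \<le> Rt V E v n u" for n using R_bounds by blast
    show "(\<Sum>i<n. Rt V E v i u) \<le> h u + C" for n using h_decomp[OF u, of n] bnd[of n] by linarith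
  qed
  then have R0: "(\<lambda>k. Rt V E v k u) \<longlonglongrightarrow> 0" by (rule summable_LIMSEQ_zero)
  have G0: "(\<lambda>k. Gt V E v h k u) \<longlonglongrightarrow> 0"
    by (rule tendsto_0_le[OF R0, of _ C]) (use G_bound[OF u] R_bounds in \<open>auto simp: algebra_simps\<close>)
  have "(\<lambda>n. h u - Gt V E v h n u) \<longlonglongrightarrow> h u - 0" by (intro tendsto_intros G0)
  moreover have "(\<lambda>n. \<Sum>k<n. Rt V E v k u) = (\<lambda>n. h u - Gt V E v h n u)"
    by (intro ext) (metis h_decomp[OF u] add_diff_cancel_right')
  ultimately have "(\<lambda>n. \<Sum>k<n. Rt V E v k u) \<longlonglongrightarrow> h u" by simp
  then show ?thesis by (simp add: sums_def)
qed

lemma partial: "u \<in> V \<Longrightarrow> (\<Sum>n<Suc M. real n * first_hit_prob V E v u n) = (\<Sum>k<M. Rt V E v k u - Rt V E v M u)"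
proof (induction M)
  case 0 then show ?case by simp
next
  case (Suc M)
  let ?R = "\<lambda>k. Rt V E v k u"
  have a: "first_hit_prob V E v u (Suc M) = ?R M - ?R (Suc M)" by (rule f_R[OF Suc.prems])
  have "(\<Sum>k<Suc M. ?R k - ?R (Suc M)) = (\<Sum>k<M. ?R k - ?R (Suc M)) + (?R M - ?R (Suc M))"
    by simp
  also have "(\<Sum>k<M. ?R k - ?R (Suc M)) = (\<Sum>k<M. ?R k - ?R M) + real M * (?R M - ?R (Suc M))"
    by (simp add: sum_subtractf algebra_simps)
  finally have b: "(\<Sum>k<Suc M. ?R k - ?R (Suc M)) = (\<Sum>k<M. ?R k - ?R M) + real (Suc M) * (?R M - ?R (Suc M))"
    by (simp add: algebra_simps)
  have "(\<Sum>n<Suc (Suc M). real n * first_hit_prob V E v u n) = (\<Sum>n<Suc M. real n * first_hit_prob V E v u n) + real (Suc M) * first_hit_prob V E v u (Suc M)"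
    by (simp only: sum.lessThan_Suc)
  then show ?case using Suc.IH[OF Suc.prems] a b by simp
qed

theorem hitting_eq: assumes u: "u \<in> V" shows "hitting_time V E u v = h u"
proof -
  let ?a = "\<lambda>n. real n * first_hit_prob V E v u n"
  let ?R = "\<lambda>k. Rt V E v k u"
  have Rs: "?R sums h u" by (rule R_sums[OF u])
  have Rnn: "0 \<le> ?R k" for k using R_bounds by blast
  have ann: "0 \<le> ?a n" for n using f_nonneg by simp
  have up: "(\<Sum>n<Suc M. ?a n) \<le> h u" for M
  proof -
    have "(\<Sum>n<Suc M. ?a n) = (\<Sum>k<M. ?R k - ?R M)" by (rule partial[OF u])
    also have "\<dots> \<le> (\<Sum>k<M. ?R k)" using Rnn by (intro sum_mono) auto
    also have "\<dots> \<le> suminf ?R" by (rule sum_le_suminf) (use Rs Rnn sums_summable in auto)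
    also have "\<dots> = h u" by (rule sums_unique[OF Rs, symmetric])
    finally show ?thesis .
  qed
  have up2: "(\<Sum>n<M. ?a n) \<le> h u" for M
  proof -
    have "(\<Sum>n<Suc M. ?a n) = (\<Sum>n<M. ?a n) + ?a M" by (rule sum.lessThan_Suc)
    then show ?thesis using up[of M] ann[of M] by linarith
  qed
  have sa: "summable ?a" by (rule summableI_nonneg_bounded[OF ann up2])
  have lo: "(\<Sum>k<K. ?R k) \<le> suminf ?a" for K
  proof -
    have ev: "\<forall>\<^sub>F M in sequentially. (\<Sum>k<K. ?R k - ?R M) \<le> suminf ?a"
    proof (rule eventually_sequentiallyI[of K])
      fix M assume KM: "K \<le> M"
      have "(\<Sum>k<K. ?R k - ?R M) \<le> (\<Sum>k<M. ?R k - ?R M)"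
        using KM R_antimono[OF u] by (intro sum_mono2) auto
      also have "\<dots> = (\<Sum>n<Suc M. ?a n)" by (rule partial[OF u, symmetric])
      also have "\<dots> \<le> suminf ?a" using sa ann by (intro sum_le_suminf) auto
      finally show "(\<Sum>k<K. ?R k - ?R M) \<le> suminf ?a" .
    qed
    have R0: "?R \<longlonglongrightarrow> 0" using Rs summable_LIMSEQ_zero sums_summable by blast
    have "(\<lambda>M. \<Sum>k<K. ?R k - ?R M) \<longlonglongrightarrow> (\<Sum>k<K. ?R k - 0)"
      by (intro tendsto_intros R0)
    from tendsto_upperbound[OF this ev] show ?thesis by simp
  qed
  have "h u \<le> suminf ?a"
    by (rule LIMSEQ_le_const2[OF Rs[unfolded sums_def]]) (use lo in auto)
  moreover have "suminf ?a \<le> h u" using sa up2 by (rule suminf_le_const)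
  ultimately show ?thesis unfolding hitting_time_def by simp
qed

end
end


lemma dvd_window: fixes n d :: int assumes "0 < n" "n dvd d" "- n < d" "d < n" shows "d = 0"
proof (rule ccontr)
  assume "d \<noteq> 0"
  then have "\<bar>n\<bar> \<le> \<bar>d\<bar>" using dvd_imp_le_int assms(2) by blast
  then show False using assms by linarith
qed

definition su :: "nat \<Rightarrow> nat \<Rightarrow> nat" where "su N i = (if i + 1 < N then i + 1 else 0)"
definition pu :: "nat \<Rightarrow> nat \<Rightarrow> nat" where "pu N i = (if i = 0 then N - 1 else i - 1)"

lemma cong_one: assumes "i < N" "j < N" "3 \<le> N"
  shows "[int j - int i = 1] (mod int N) \<longleftrightarrow> j = su N i"
proof
  assume c: "[int j - int i = 1] (mod int N)"
  then have dv: "int N dvd (int j - int i - 1)" by (simp add: cong_iff_dvd_diff)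
  show "j = su N i"
  proof (cases "i + 1 < N")
    case True
    have "int j - int i - 1 = 0" by (rule dvd_window[OF _ dv]) (use assms True in auto)
    then show ?thesis using True by (simp add: su_def)
  next
    case False
    have dv2: "int N dvd (int j - int i - 1 + int N)" using dv by simp
    have "int j - int i - 1 + int N = 0" by (rule dvd_window[OF _ dv2]) (use assms False in auto)
    then show ?thesis using False assms by (simp add: su_def)
  qed
next
  assume "j = su N i"
  then show "[int j - int i = 1] (mod int N)"
  proof (cases "i + 1 < N")
    case True then show ?thesis using \<open>j = su N i\<close> by (simp add: su_def)
  next
    case False
    then have "i = N - 1" "j = 0" using assms \<open>j = su N i\<close> by (auto simp: su_def)
    then have "int j - int i = 1 - int N" using assms by simp
    then show ?thesis by (simp add: cong_iff_dvd_diff)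
  qed
qed

lemma cong_mone: assumes "i < N" "j < N" "3 \<le> N"
  shows "[int j - int i = -1] (mod int N) \<longleftrightarrow> i = su N j"
proof -
  have "[int j - int i = -1] (mod int N) \<longleftrightarrow> [int i - int j = 1] (mod int N)"
    by (simp add: cong_iff_dvd_diff dvd_diff_commute algebra_simps)
  then show ?thesis using cong_one[OF assms(2,1,3)] by simp
qed

lemma su_pu: "i < N \<Longrightarrow> (i = su N j \<and> j < N) \<longleftrightarrow> (j = pu N i)"
  by (auto simp: su_def pu_def)

lemma nbrs_GN1: assumes "u < N" "3 \<le> N"
  shows "nbrs {0..<N} (GN1_adj N) u = {0..<N} - {u, su N u, pu N u}"
proof -
  have "w \<in> nbrs {0..<N} (GN1_adj N) u \<longleftrightarrow> w \<in> {0..<N} - {u, su N u, pu N u}" for w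
  proof (cases "w < N")
    case True
    show ?thesis unfolding nbrs_def GN1_adj_def using cong_one[OF assms(1) True assms(2)]
      cong_mone[OF assms(1) True assms(2)] su_pu[OF assms(1), of w] True by auto
  qed (auto simp: nbrs_def)
  then show ?thesis by blast
qed

lemma su_lt: "3 \<le> N \<Longrightarrow> su N u < N" by (auto simp: su_def)
lemma pu_lt: "3 \<le> N \<Longrightarrow> u < N \<Longrightarrow> pu N u < N" by (auto simp: pu_def)

lemma card_nbrs_GN1: assumes "u < N" "3 \<le> N"
  shows "card (nbrs {0..<N} (GN1_adj N) u) = N - 3"
proof -
  have d: "u \<noteq> su N u" "u \<noteq> pu N u" "su N u \<noteq> pu N u" using assms by (auto simp: su_def pu_def)
  have "card {u, su N u, pu N u} = 3" using d by auto
  moreover have "{u, su N u, pu N u} \<subseteq> {0..<N}" using assms su_lt pu_lt by auto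
  ultimately show ?thesis unfolding nbrs_GN1[OF assms] by (simp add: card_Diff_subset)
qed

definition Cyc :: "nat \<Rightarrow> nat set set" where "Cyc N = (\<lambda>i. {i, su N i}) ` {0..<N}"

lemma edges_eq: assumes "3 \<le> N"
  shows "GN1_edges N = {B. B \<subseteq> {0..<N} \<and> card B = 2} - Cyc N"
proof (intro set_eqI iffI)
  fix B assume "B \<in> GN1_edges N"
  then obtain i j where B: "B = {i, j}" "i < N" "j < N" "GN1_adj N i j" unfolding GN1_edges_def by blast
  have ne: "i \<noteq> j" using B(4) unfolding GN1_adj_def by blast
  have nc: "j \<noteq> su N i" "i \<noteq> su N j"
    using B(4) cong_one[OF B(2,3) assms] cong_mone[OF B(2,3) assms] unfolding GN1_adj_def by blast+
  have "B \<notin> Cyc N"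
  proof
    assume "B \<in> Cyc N"
    then obtain k where "{i, j} = {k, su N k}" unfolding Cyc_def B by blast
    then have "(i = k \<and> j = su N k) \<or> (i = su N k \<and> j = k)" unfolding doubleton_eq_iff by blast
    then show False using nc by blast
  qed
  moreover have "card B = 2" using B(1) ne by simp
  moreover have "B \<subseteq> {0..<N}" using B by simp
  ultimately show "B \<in> {B. B \<subseteq> {0..<N} \<and> card B = 2} - Cyc N" by blast
next
  fix B assume a: "B \<in> {B. B \<subseteq> {0..<N} \<and> card B = 2} - Cyc N"
  have c2: "card B = 2" and sub: "B \<subseteq> {0..<N}" and nC: "B \<notin> Cyc N" using a by simp_all
  from c2 obtain i j where B: "B = {i, j}" "i \<noteq> j" by (auto simp: card_2_iff)
  have ij: "i < N" "j < N" using sub unfolding B by simp_all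
  have "j \<noteq> su N i"
  proof
    assume "j = su N i"
    then have "B \<in> Cyc N" unfolding Cyc_def B by (intro image_eqI[where x=i]) (use ij in auto)
    then show False using nC by blast
  qed
  moreover have "i \<noteq> su N j"
  proof
    assume "i = su N j"
    then have "B = {j, su N j}" using B by (simp add: insert_commute)
    then have "B \<in> Cyc N" unfolding Cyc_def by (intro image_eqI[where x=j]) (use ij in auto)
    then show False using nC by blast
  qed
  ultimately have adj: "GN1_adj N i j" unfolding GN1_adj_def
    using cong_one[OF ij assms] cong_mone[OF ij assms] B(2) by simp
  have "\<exists>i' j'. B = {i', j'} \<and> i' < N \<and> j' < N \<and> GN1_adj N i' j'"
    using B(1) ij adj by (intro exI[of _ i] exI[of _ j]) simp
  then show "B \<in> GN1_edges N" unfolding GN1_edges_def by (simp only: mem_Collect_eq)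
qed

lemma card_Cyc: assumes "3 \<le> N" shows "card (Cyc N) = N"
proof -
  have "inj_on (\<lambda>i. {i, su N i}) {0..<N}"
  proof (rule inj_onI)
    fix a b assume ab: "a \<in> {0..<N}" "b \<in> {0..<N}" "{a, su N a} = {b, su N b}"
    show "a = b"
    proof (rule ccontr)
      assume "a \<noteq> b"
      then have "a = su N b" "b = su N a" using ab(3) unfolding doubleton_eq_iff by auto
      then show False using ab assms by (auto simp: su_def split: if_splits)
    qed
  qed
  then show ?thesis unfolding Cyc_def by (simp add: card_image)
qed

lemma card_edges: assumes "3 \<le> N" shows "card (GN1_edges N) = N * (N - 3) div 2"
proof -
  have sub: "Cyc N \<subseteq> {B. B \<subseteq> {0..<N} \<and> card B = 2}"
  proof
    fix B assume "B \<in> Cyc N"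
    then obtain i where i: "i < N" "B = {i, su N i}" unfolding Cyc_def by auto
    have "i \<noteq> su N i" using assms by (auto simp: su_def)
    then show "B \<in> {B. B \<subseteq> {0..<N} \<and> card B = 2}" using i su_lt[OF assms] by auto
  qed
  have fin: "finite {B. B \<subseteq> {0..<N} \<and> card B = 2}"
    by (rule finite_subset[of _ "Pow {0..<N}"]) auto
  have c1: "card {B. B \<subseteq> {0..<N} \<and> card B = 2} = N * (N - 1) div 2"
    using n_subsets[of "{0..<N}" 2] by (simp add: choose_two)
  have c2: "card (GN1_edges N) = card {B. B \<subseteq> {0..<N} \<and> card B = 2} - card (Cyc N)"
    unfolding edges_eq[OF assms] by (rule card_Diff_subset[OF finite_subset[OF sub fin] sub])
  obtain k where k: "N = k + 3" using assms by (metis add.commute le_iff_add)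
  have "N * (N - 1) = N * (N - 3) + 2 * N" unfolding k by (simp add: algebra_simps)
  then have "N * (N - 1) div 2 = N * (N - 3) div 2 + N" by simp
  then show ?thesis using c1 c2 card_Cyc[OF assms] by simp
qed



locale GN =
  fixes N :: nat
  assumes N5: "5 \<le> N" and oddN: "odd N"
begin

definition "Dl = sqrt (real N * (real N - 4))"
definition "rho = (real N - 2 + Dl) / 2"
definition "xx = - rho"
definition "cc = real N * (real N - 3) / (Dl * (rho ^ N + 1))"
definition "F n = cc * (rho ^ N - 1 + xx ^ n + xx ^ (N - n))"

lemma Dl_pos: "Dl > 0" unfolding Dl_def using N5 by simp
lemma Dl_sq: "Dl ^ 2 = real N * (real N - 4)" unfolding Dl_def using N5 by simp
lemma rho_pos: "rho > 0" unfolding rho_def using N5 Dl_pos by simp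
lemma two_rho: "2 * rho = real N - 2 + Dl" unfolding rho_def by simp
lemma xx_eq: "xx ^ 2 + (real N - 2) * xx + 1 = 0"
proof -
  have "4 * (xx ^ 2 + (real N - 2) * xx + 1) = (2 * rho) ^ 2 - (real N - 2) * (2 * (2 * rho)) + 4"
    unfolding xx_def by (simp add: power2_eq_square algebra_simps)
  also have "\<dots> = Dl ^ 2 - real N * (real N - 4)"
    unfolding two_rho by (simp add: power2_eq_square algebra_simps)
  finally show ?thesis using Dl_sq by simp
qed
lemma xx_N: "xx ^ N = - (rho ^ N)" unfolding xx_def using oddN by simp

lemma F0: "F 0 = 0" unfolding F_def using xx_N by simp
lemma FN: "F N = F 0" unfolding F_def by simp

lemma recur: assumes "1 \<le> q" "q \<le> N - 1"
  shows "F (q - 1) + (real N - 2) * F q + F (q + 1) = real N * cc * (rho ^ N - 1)"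
proof -
  obtain p where p: "q = Suc p" using assms by (cases q) auto
  define m where "m = N - q - 1"
  have m: "N = q + 1 + m" unfolding m_def using assms N5 by simp
  have e1: "N - p = m + 2" "N - Suc p = m + 1" "N - Suc (Suc p) = m" using m p by arith+
  have "F (q - 1) + (real N - 2) * F q + F (q + 1) =
    cc * (real N * (rho ^ N - 1) + xx ^ p * (xx ^ 2 + (real N - 2) * xx + 1)
          + xx ^ m * (xx ^ 2 + (real N - 2) * xx + 1))"
    unfolding F_def p by (simp add: e1 algebra_simps power2_eq_square)
  then show ?thesis using xx_eq by simp
qed

lemma sumF: "(\<Sum>r<N. F r) = real N * cc * (rho ^ N - 1) - (real N - 3)"
proof -
  have g: "(\<Sum>r<N. xx ^ r) = (1 + rho ^ N) / (1 + rho)"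
    using sum_gp_strict[of xx N] xx_N rho_pos unfolding xx_def by (simp add: field_simps)
  have "(\<Sum>r<N. xx ^ (N - r)) = (\<Sum>i<N. xx ^ (N - (N - Suc i)))"
    by (rule sum.nat_diff_reindex[symmetric])
  also have "\<dots> = (\<Sum>i<N. xx * xx ^ i)" by (intro sum.cong) auto
  also have "\<dots> = xx * (\<Sum>i<N. xx ^ i)" by (simp add: sum_distrib_left)
  finally have g2: "(\<Sum>r<N. xx ^ (N - r)) = - rho * ((1 + rho ^ N) / (1 + rho))"
    using g unfolding xx_def by simp
  define A where "A = (1 + rho ^ N) / (1 + rho)"
  have "(\<Sum>r<N. F r) = (\<Sum>r<N. cc * (rho ^ N - 1) + cc * xx ^ r + cc * xx ^ (N - r))"
    unfolding F_def by (simp add: algebra_simps)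
  also have "\<dots> = cc * (real N * (rho ^ N - 1) + (\<Sum>r<N. xx ^ r) + (\<Sum>r<N. xx ^ (N - r)))"
    by (simp only: sum.distrib sum_distrib_left[symmetric]) (simp add: algebra_simps)
  also have "\<dots> = real N * cc * (rho ^ N - 1) + cc * (1 - rho) * A"
    unfolding g g2 A_def[symmetric] by (simp add: algebra_simps)
  also have "cc * (1 - rho) * A = cc * (1 - rho) * (1 + rho ^ N) / (1 + rho)"
    unfolding A_def by simp
  also have "cc * (1 - rho) * (1 + rho ^ N) / (1 + rho) = - (real N - 3)"
  proof -
    have gen2: "\<And>a b::real. b \<noteq> 0 \<Longrightarrow> a * (- b) / b = - a" by simp
    have pN: "rho ^ N + 1 > 0" using rho_pos by (simp add: add_pos_pos)
    have key: "real N * (1 - rho) = - (Dl * (1 + rho))"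
    proof -
      have "2 * (real N * (1 - rho) + Dl * (1 + rho)) = 2 * real N - real N * (2 * rho) + 2 * Dl + Dl * (2 * rho)"
        by (simp add: algebra_simps)
      also have "\<dots> = Dl ^ 2 - real N * (real N - 4)"
        unfolding two_rho by (simp add: power2_eq_square algebra_simps)
      finally have "2 * (real N * (1 - rho) + Dl * (1 + rho)) = Dl ^ 2 - real N * (real N - 4)" .
      then show ?thesis using Dl_sq by simp
    qed
    have c1: "cc * (1 + rho ^ N) = real N * (real N - 3) / Dl"
    proof -
      have gen: "\<And>a d b::real. b \<noteq> 0 \<Longrightarrow> a / (d * b) * b = a / d" by simp
      show ?thesis unfolding cc_def using gen[of "rho ^ N + 1" "real N * (real N - 3)" Dl] pN
        by (simp add: add.commute)
    qed
    have "cc * (1 - rho) * (1 + rho ^ N) / (1 + rho) = (cc * (1 + rho ^ N)) * (1 - rho) / (1 + rho)"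
      by (simp add: algebra_simps)
    also have "\<dots> = (real N - 3) * (real N * (1 - rho)) / (Dl * (1 + rho))"
      unfolding c1 by (simp add: field_simps)
    finally have "cc * (1 - rho) * (1 + rho ^ N) / (1 + rho) = (real N - 3) * (real N * (1 - rho)) / (Dl * (1 + rho))" .
    also have "\<dots> = - (real N - 3)" unfolding key
    proof (rule gen2)
      show "Dl * (1 + rho) \<noteq> 0" using Dl_pos rho_pos by simp
    qed
    finally show ?thesis .
  qed
  finally show ?thesis by simp
qed

lemma formula_eq: assumes "q < N"
  shows "cc * (rho ^ N - 1 + (-1) ^ q * (rho ^ q - rho ^ (N - q))) = F q"
proof -
  have "N = (N - q) + q" using assms by simp
  then have "even N \<longleftrightarrow> (even (N - q) \<longleftrightarrow> even q)" by (metis even_add)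
  then have par: "even (N - q) \<longleftrightarrow> odd q" using oddN by blast
  have s: "(-1::real) ^ (N - q) = - ((-1) ^ q)"
    by (cases "even q") (use par in auto)
  have a: "xx ^ n = (-1) ^ n * rho ^ n" for n unfolding xx_def by (rule power_minus)
  have "xx ^ q + xx ^ (N - q) = (-1) ^ q * rho ^ q - (-1) ^ q * rho ^ (N - q)"
    unfolding a s by simp
  also have "\<dots> = (-1) ^ q * (rho ^ q - rho ^ (N - q))" by (rule right_diff_distrib[symmetric])
  finally have b: "xx ^ q + xx ^ (N - q) = (-1) ^ q * (rho ^ q - rho ^ (N - q))" .
  show ?thesis unfolding F_def b[symmetric] by (simp add: algebra_simps)
qed

end

theorem corollary4p2:
  fixes N u v q :: nat
  defines "\<Delta> \<equiv> sqrt (real N * (real N - 4))"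
  defines "\<rho> \<equiv> (real N - 2 + \<Delta>) / 2"
  assumes "N \<ge> 5" and "odd N"
    and "u < N" and "v < N" and "q < N" and "[int q = int v - int u] (mod int N)"
  shows "card (GN1_edges N) = N * (N - 3) div 2
     \<and> hitting_time {0..<N} (GN1_adj N) u v
         = real N * (real N - 3) / (\<Delta> * (\<rho> ^ N + 1))
           * (\<rho> ^ N - 1 + (-1) ^ q * (\<rho> ^ q - \<rho> ^ (N - q)))"
proof -
  interpret G: GN N using assms(3,4) by unfold_locales
  have N3: "3 \<le> N" using assms(3) by simp
  have DlE: "\<Delta> = G.Dl" unfolding \<Delta>_def G.Dl_def ..
  have rhoE: "\<rho> = G.rho" unfolding \<rho>_def G.rho_def DlE ..
  define dd where "dd w = (if w \<le> v then v - w else v + N - w)" for w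
  define h where "h w = G.F (dd w)" for w
  have dd_lt: "dd w < N" if "w < N" for w using that assms(6) unfolding dd_def by auto
  have dd_inv: "dd (dd w) = w" if "w < N" for w using that assms(6) unfolding dd_def by auto
  have rw: "rwalk {0..<N} (GN1_adj N) v"
  proof
    show "finite {0..<N}" by simp
    show "v \<in> {0..<N}" using assms(6) by simp
    fix u assume "u \<in> {0..<N}"
    then have "card (nbrs {0..<N} (GN1_adj N) u) = N - 3" using card_nbrs_GN1 N3 by simp
    then show "nbrs {0..<N} (GN1_adj N) u \<noteq> {}" using assms(3) by auto
  qed
  have hv: "h v = 0" using G.F0 by (simp add: h_def dd_def)
  have sumh: "(\<Sum>w\<in>{0..<N}. h w) = (\<Sum>r\<in>{0..<N}. G.F r)"
    unfolding h_def
    by (rule sum.reindex_bij_witness[where i=dd and j=dd]) (auto simp: dd_lt dd_inv)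
  have heq: "h u = 1 + (\<Sum>w\<in>nbrs {0..<N} (GN1_adj N) u. h w) / real (card (nbrs {0..<N} (GN1_adj N) u))"
    if u: "u \<in> {0..<N}" "u \<noteq> v" for u
  proof -
    have uN: "u < N" using u by simp
    define q where "q = dd u"
    have q1: "1 \<le> q" "q \<le> N - 1" using uN u(2) assms(6) unfolding q_def dd_def by auto
    have dsu: "dd (su N u) = q - 1" using uN u(2) assms(6) unfolding q_def dd_def su_def by auto
    have dpu: "dd (pu N u) = (if q + 1 = N then 0 else q + 1)"
      using uN u(2) assms(6) unfolding q_def dd_def pu_def by auto
    have hpu: "h (pu N u) = G.F (q + 1)"
      unfolding h_def dpu using G.FN by auto
    have dist3: "u \<noteq> su N u" "u \<noteq> pu N u" "su N u \<noteq> pu N u" using uN N3 by (auto simp: su_def pu_def)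
    have sub3: "{u, su N u, pu N u} \<subseteq> {0..<N}" using uN N3 su_lt pu_lt by auto
    have "(\<Sum>w\<in>nbrs {0..<N} (GN1_adj N) u. h w) = (\<Sum>w\<in>{0..<N}. h w) - (\<Sum>w\<in>{u, su N u, pu N u}. h w)"
      unfolding nbrs_GN1[OF uN N3] by (rule sum_diff[OF _ sub3]) simp
    also have "(\<Sum>w\<in>{u, su N u, pu N u}. h w) = h u + h (su N u) + h (pu N u)"
      using dist3 by simp
    also have "h u = G.F q" unfolding h_def q_def ..
    also have "h (su N u) = G.F (q - 1)" unfolding h_def dsu ..
    also note hpu
    also note sumh
    also have "(\<Sum>r\<in>{0..<N}. G.F r) = real N * G.cc * (G.rho ^ N - 1) - (real N - 3)"
      using G.sumF by (simp add: atLeast0LessThan)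
    finally have S: "(\<Sum>w\<in>nbrs {0..<N} (GN1_adj N) u. h w) =
       real N * G.cc * (G.rho ^ N - 1) - (real N - 3) - (G.F q + G.F (q - 1) + G.F (q + 1))" .
    have K: "G.F (q - 1) + (real N - 2) * G.F q + G.F (q + 1) = real N * G.cc * (G.rho ^ N - 1)"
      by (rule G.recur[OF q1])
    have c: "real (card (nbrs {0..<N} (GN1_adj N) u)) = real N - 3"
      using card_nbrs_GN1[OF uN N3] N3 by (simp add: of_nat_diff)
    have num: "(\<Sum>w\<in>nbrs {0..<N} (GN1_adj N) u. h w) = (real N - 3) * (G.F q - 1)"
      unfolding S K[symmetric] by (simp add: algebra_simps)
    have "real N - 3 \<noteq> 0" using N3 assms(3) by simp
    then show ?thesis unfolding num c by (simp add: h_def q_def)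
  qed
  have ht: "hitting_time {0..<N} (GN1_adj N) u v = h u"
    by (rule rwalk.hitting_eq[OF rw hv heq]) (use assms(5) in auto)
  have cq: "[int (dd u) = int v - int u] (mod int N)"
  proof (cases "u \<le> v")
    case True then show ?thesis unfolding dd_def by (simp add: of_nat_diff)
  next
    case False
    then have "int (dd u) = (int v - int u) + int N" unfolding dd_def using assms(5) by simp
    then show ?thesis by (simp add: cong_def)
  qed
  have "[int q = int (dd u)] (mod int N)" using assms(8) cq by (metis cong_sym cong_trans)
  then have "int q = int (dd u)" by (rule cong_less_imp_eq_int[rotated 4]) (use assms(7,5) dd_lt in auto)
  then have qd: "q = dd u" by simp
  have cE: "real N * (real N - 3) / (\<Delta> * (\<rho> ^ N + 1)) = G.cc" unfolding G.cc_def rhoE DlE ..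
  show ?thesis
  proof
    show "card (GN1_edges N) = N * (N - 3) div 2" by (rule card_edges[OF N3])
    show "hitting_time {0..<N} (GN1_adj N) u v
         = real N * (real N - 3) / (\<Delta> * (\<rho> ^ N + 1))
           * (\<rho> ^ N - 1 + (-1) ^ q * (\<rho> ^ q - \<rho> ^ (N - q)))"
    proof -
      have "hitting_time {0..<N} (GN1_adj N) u v = G.F q" unfolding ht h_def qd ..
      moreover have "real N * (real N - 3) / (\<Delta> * (\<rho> ^ N + 1)) * (\<rho> ^ N - 1 + (-1) ^ q * (\<rho> ^ q - \<rho> ^ (N - q)))
          = G.cc * (G.rho ^ N - 1 + (-1) ^ q * (G.rho ^ q - G.rho ^ (N - q)))"
        by (simp only: G.cc_def DlE rhoE)
      ultimately show ?thesis using G.formula_eq[OF assms(7)] by simp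
    qed
  qed
qed

end
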